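(* Let $h$ be a penalty function on the simplex $\Delta=\Delta(\{1,\dots,n\})\subset\mathbb{R}^n$ and let $Q(y)=\arg\max_{x\in\Delta}\{\langle y,x\rangle-h(x)\}$, $y\in\mathbb{R}^n$, be its induced choice map. Then: (i) $Q(y')=Q(y)$ for all $y,y'\in\mathbb{R}^n$ with $y'-y$ proportional to $(1,\dots,1)$; (ii) $Q(y-te_\beta)=Q(y)$ for all $t\ge0$ and all $y\in\mathbb{R}^n$ such that $Q_\beta(y)=0$; (iii) for every sequence $y_j\in\mathbb{R}^n$ with $y_{j,\alpha}-y_{j,\beta}\to-\infty$ for some $\beta\ne\alpha$, $Q_\alpha(y_j)\to0$.
   Context: A penalty function on $\Delta$ is $h:\Delta\to\mathbb{R}$ that is continuous, $C^\infty$ on the relative interior of every face of $\Delta$, and strongly convex: for some $K>0$ and norm $\|\cdot\|$, $h(tx_1+(1-t)x_2)\le th(x_1)+(1-t)h(x_2)-\tfrac12Kt(1-t)\|x_1-x_2\|^2$ for all $x_1,x_2\in\Delta$, $t\in[0,1]$. $e_\beta$ denotes the $\beta$-th standard basis vector. *)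

theory Defs
  imports "HOL-Analysis.Analysis"
begin

definition prob_simplex :: "(real ^ 'n::finite) set" where
  "prob_simplex = {x. (\<forall>i. 0 \<le> x $ i) \<and> (\<Sum>i\<in>UNIV. x $ i) = 1}"

fun Ck_on :: "nat \<Rightarrow> ('a::euclidean_space \<Rightarrow> real) \<Rightarrow> 'a set \<Rightarrow> bool" where
  "Ck_on 0 f U = continuous_on U f"
| "Ck_on (Suc k) f U =
     (f differentiable_on U \<and>
      (\<forall>b\<in>Basis. Ck_on k (\<lambda>x. frechet_derivative f (at x) b) U))"

definition smooth_on_open :: "('a::euclidean_space \<Rightarrow> real) \<Rightarrow> 'a set \<Rightarrow> bool" where
  "smooth_on_open f U \<longleftrightarrow> open U \<and> (\<forall>k. Ck_on k f U)"

text \<open>C^infinity on an arbitrary (e.g. relatively open, lower-dimensional) set A: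
  h agrees on A with a C^infinity function defined on an open neighbourhood of A.\<close>
definition smooth_on_set :: "('a::euclidean_space \<Rightarrow> real) \<Rightarrow> 'a set \<Rightarrow> bool" where
  "smooth_on_set h A \<longleftrightarrow>
     (\<exists>U g. A \<subseteq> U \<and> smooth_on_open g U \<and> (\<forall>x\<in>A. g x = h x))"

definition is_norm :: "('a::real_vector \<Rightarrow> real) \<Rightarrow> bool" where
  "is_norm N \<longleftrightarrow> (\<forall>x. 0 \<le> N x) \<and> (\<forall>x. N x = 0 \<longleftrightarrow> x = 0)
     \<and> (\<forall>c x. N (c *\<^sub>R x) = \<bar>c\<bar> * N x) \<and> (\<forall>x y. N (x + y) \<le> N x + N y)"

definition strongly_convex_on :: "'a::real_vector set \<Rightarrow> ('a \<Rightarrow> real) \<Rightarrow> bool" where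
  "strongly_convex_on D h \<longleftrightarrow>
     (\<exists>K N. K > 0 \<and> is_norm N \<and>
        (\<forall>x1\<in>D. \<forall>x2\<in>D. \<forall>t\<in>{0..1}.
           h (t *\<^sub>R x1 + (1 - t) *\<^sub>R x2)
             \<le> t * h x1 + (1 - t) * h x2 - 1/2 * K * t * (1 - t) * (N (x1 - x2))\<^sup>2))"

definition penalty_function :: "(real ^ 'n::finite \<Rightarrow> real) \<Rightarrow> bool" where
  "penalty_function h \<longleftrightarrow>
     continuous_on prob_simplex h
     \<and> (\<forall>F. F face_of prob_simplex \<longrightarrow> smooth_on_set h (rel_interior F))
     \<and> strongly_convex_on prob_simplex h"

definition choice_map :: "(real ^ 'n::finite \<Rightarrow> real) \<Rightarrow> real ^ 'n \<Rightarrow> real ^ 'n" where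
  "choice_map h y = (THE x. x \<in> prob_simplex \<and>
      (\<forall>x'\<in>prob_simplex. inner y x' - h x' \<le> inner y x - h x))"

end

theory Submission
  imports Defs
begin

lemma simplex_closed: "closed (prob_simplex :: (real ^ 'n::finite) set)"
proof -
  have "prob_simplex = (\<Inter>i. {x::real^'n. 0 \<le> x $ i}) \<inter> {x. (\<Sum>i\<in>UNIV. x $ i) = 1}"
    unfolding prob_simplex_def by auto
  moreover have "closed {x::real^'n. (\<Sum>i\<in>UNIV. x $ i) = 1}"
    by (intro closed_Collect_eq continuous_intros)
  moreover have "\<And>i. closed {x::real^'n. 0 \<le> x $ i}"
    by (intro closed_Collect_le continuous_intros)
  ultimately show ?thesis by (metis closed_INT closed_Int)
qed

lemma simplex_bounded: "bounded (prob_simplex :: (real ^ 'n::finite) set)"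
proof -
  have "prob_simplex \<subseteq> cbox (0::real^'n) (\<chi> i. 1)"
  proof
    fix x :: "real^'n" assume x: "x \<in> prob_simplex"
    have "\<forall>i. 0 \<le> x $ i \<and> x $ i \<le> 1"
    proof
      fix i
      have "x $ i \<le> (\<Sum>j\<in>UNIV. x $ j)"
        using x unfolding prob_simplex_def
        by (intro member_le_sum) auto
      then show "0 \<le> x $ i \<and> x $ i \<le> 1" using x unfolding prob_simplex_def by auto
    qed
    then show "x \<in> cbox 0 (\<chi> i. 1)" by (simp add: mem_box_cart)
  qed
  then show ?thesis using bounded_cbox bounded_subset by blast
qed

lemma simplex_compact: "compact (prob_simplex :: (real ^ 'n::finite) set)"
  using simplex_closed simplex_bounded by (simp add: compact_eq_bounded_closed)

lemma simplex_nonempty: "(prob_simplex :: (real ^ 'n::finite) set) \<noteq> {}"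
proof -
  obtain i :: 'n where True by auto
  have "axis i (1::real) \<in> prob_simplex"
    unfolding prob_simplex_def axis_def by (simp add: sum.delta)
  then show ?thesis by auto
qed

lemma simplex_convex:
  assumes "x \<in> prob_simplex" "y \<in> prob_simplex" "0 \<le> t" "t \<le> 1"
  shows "t *\<^sub>R x + (1 - t) *\<^sub>R y \<in> (prob_simplex :: (real ^ 'n::finite) set)"
  using assms unfolding prob_simplex_def
  by (auto simp: sum.distrib sum_distrib_left[symmetric])

definition ismax :: "(real ^ 'n::finite \<Rightarrow> real) \<Rightarrow> real ^ 'n \<Rightarrow> real ^ 'n \<Rightarrow> bool" where
  "ismax h y x \<longleftrightarrow> x \<in> prob_simplex \<and>
      (\<forall>x'\<in>prob_simplex. inner y x' - h x' \<le> inner y x - h x)"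

lemma ismax_exists:
  assumes "penalty_function h"
  shows "\<exists>x. ismax h y x"
proof -
  have "continuous_on prob_simplex (\<lambda>x. inner y x - h x)"
    using assms unfolding penalty_function_def
    by (intro continuous_intros) auto
  from continuous_attains_sup[OF simplex_compact simplex_nonempty this]
  show ?thesis unfolding ismax_def by blast
qed

lemma ismax_unique:
  assumes "penalty_function h" "ismax h y x1" "ismax h y x2"
  shows "x1 = x2"
proof (rule ccontr)
  assume ne: "x1 \<noteq> x2"
  from assms(1) obtain K N where K: "K > 0" "is_norm N" and
    sc: "\<forall>x1\<in>prob_simplex. \<forall>x2\<in>prob_simplex. \<forall>t\<in>{0..1}.
           h (t *\<^sub>R x1 + (1 - t) *\<^sub>R x2)
             \<le> t * h x1 + (1 - t) * h x2 - 1/2 * K * t * (1 - t) * (N (x1 - x2))\<^sup>2"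
    unfolding penalty_function_def strongly_convex_on_def by blast
  have m1: "x1 \<in> prob_simplex" and m2: "x2 \<in> prob_simplex"
    using assms(2,3) unfolding ismax_def by auto
  have Npos: "N (x1 - x2) > 0"
    using K(2) ne unfolding is_norm_def by (metis eq_iff_diff_eq_0 less_eq_real_def)
  define m where "m = (1/2::real) *\<^sub>R x1 + (1 - 1/2) *\<^sub>R x2"
  have mS: "m \<in> prob_simplex" unfolding m_def by (rule simplex_convex[OF m1 m2]) auto
  have hm: "h m \<le> 1/2 * h x1 + (1 - 1/2) * h x2 - 1/2 * K * (1/2) * (1 - 1/2) * (N (x1 - x2))\<^sup>2"
  proof -
    have "(1/2::real) \<in> {0..1}" by simp
    then show ?thesis using sc m1 m2 unfolding m_def by blast
  qed
  have im: "inner y m = 1/2 * inner y x1 + 1/2 * inner y x2"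
    unfolding m_def by (simp add: inner_add_right)
  have eq: "inner y x1 - h x1 = inner y x2 - h x2"
    using assms(2,3) m1 m2 unfolding ismax_def by (meson order_antisym)
  have "inner y m - h m \<le> inner y x1 - h x1"
    using assms(2) mS unfolding ismax_def by auto
  moreover have "K * (N (x1 - x2))\<^sup>2 > 0" using K Npos by simp
  moreover have hm': "h m \<le> 1/2*h x1 + 1/2*h x2 - (K*(N(x1-x2))\<^sup>2)/8"
    using hm by (simp add: algebra_simps)
  ultimately show False using im eq by linarith
qed

lemma choice_map_ismax:
  assumes "penalty_function h"
  shows "ismax h y (choice_map h y)"
proof -
  have "\<exists>!x. ismax h y x" using ismax_exists[OF assms] ismax_unique[OF assms] by blast
  then show ?thesis unfolding choice_map_def ismax_def[symmetric] by (rule theI')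
qed

lemma choice_map_eq:
  assumes "penalty_function h" "ismax h y x"
  shows "choice_map h y = x"
  using ismax_unique[OF assms(1) choice_map_ismax[OF assms(1)] assms(2)] .

lemma h_bounded:
  assumes "penalty_function h"
  shows "\<exists>B. \<forall>x\<in>prob_simplex. \<bar>h x\<bar> \<le> B"
proof -
  have "compact (h ` prob_simplex)"
    using assms unfolding penalty_function_def
    by (intro compact_continuous_image simplex_compact) auto
  then have "bounded (h ` prob_simplex)" by (rule compact_imp_bounded)
  then show ?thesis unfolding bounded_iff by auto
qed

theorem propositionA1:
  fixes h :: "real ^ 'n::finite \<Rightarrow> real"
  assumes "penalty_function h"
  shows "(\<forall>y y' :: real ^ 'n. \<forall>c::real. y' - y = c *\<^sub>R (\<chi> i. 1) \<longrightarrow>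
            choice_map h y' = choice_map h y)
       \<and> (\<forall>(y :: real ^ 'n) \<beta> (t::real). t \<ge> 0 \<and> choice_map h y $ \<beta> = 0 \<longrightarrow>
            choice_map h (y - t *\<^sub>R axis \<beta> 1) = choice_map h y)
       \<and> (\<forall>(ys :: nat \<Rightarrow> real ^ 'n) \<alpha> \<beta>. \<beta> \<noteq> \<alpha> \<and>
            filterlim (\<lambda>j. ys j $ \<alpha> - ys j $ \<beta>) at_bot sequentially \<longrightarrow>
            (\<lambda>j. choice_map h (ys j) $ \<alpha>) \<longlonglongrightarrow> 0)"
proof (intro conjI allI impI)
  fix y y' :: "real^'n" and c :: real
  assume yc: "y' - y = c *\<^sub>R (\<chi> i. 1)"
  have sh: "inner y' x = inner y x + c" if "x \<in> prob_simplex" for x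
  proof -
    have "y' = y + c *\<^sub>R (\<chi> i. 1)" using yc by (simp add: algebra_simps)
    then have "inner y' x = inner y x + c * (\<Sum>i\<in>UNIV. x $ i)"
      by (simp add: inner_add_left inner_vec_def sum_distrib_left distrib_right sum.distrib)
    then show ?thesis using that unfolding prob_simplex_def by simp
  qed
  show "choice_map h y' = choice_map h y"
    apply (rule choice_map_eq[OF assms])
    using choice_map_ismax[OF assms, of y] sh unfolding ismax_def by auto
next
  fix y :: "real^'n" and \<beta> and t :: real
  assume a: "0 \<le> t \<and> choice_map h y $ \<beta> = 0"
  let ?x = "choice_map h y"
  have ix: "ismax h y ?x" by (rule choice_map_ismax[OF assms])
  have "inner (y - t *\<^sub>R axis \<beta> 1) x' = inner y x' - t * x' $ \<beta>" for x'
    by (simp add: inner_diff_left inner_axis')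
  moreover have "t * x' $ \<beta> \<ge> 0" if "x' \<in> prob_simplex" for x'
    using a that unfolding prob_simplex_def by simp
  ultimately show "choice_map h (y - t *\<^sub>R axis \<beta> 1) = ?x"
    using ix a unfolding ismax_def
    by (intro choice_map_eq[OF assms]) (auto simp: ismax_def, smt (verit))
next
  fix ys :: "nat \<Rightarrow> real^'n" and \<alpha> \<beta>
  assume a: "\<beta> \<noteq> \<alpha> \<and> filterlim (\<lambda>j. ys j $ \<alpha> - ys j $ \<beta>) at_bot sequentially"
  obtain B where B: "\<forall>x\<in>prob_simplex. \<bar>h x\<bar> \<le> B" using h_bounded[OF assms] by blast
  show "(\<lambda>j. choice_map h (ys j) $ \<alpha>) \<longlonglongrightarrow> 0"
    unfolding tendsto_iff
  proof (intro allI impI)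
    fix e :: real assume e: "e > 0"
    have ev: "eventually (\<lambda>j. ys j $ \<alpha> - ys j $ \<beta> \<le> - (2*B+1)/e) sequentially"
      using a unfolding filterlim_at_bot by blast
    show "eventually (\<lambda>j. dist (choice_map h (ys j) $ \<alpha>) 0 < e) sequentially"
    proof (rule eventually_mono[OF ev])
      fix j assume j: "ys j $ \<alpha> - ys j $ \<beta> \<le> - (2*B+1)/e"
      let ?y = "ys j"
      let ?x = "choice_map h ?y"
      have ix: "ismax h ?y ?x" by (rule choice_map_ismax[OF assms])
      then have xS: "?x \<in> prob_simplex" unfolding ismax_def by auto
      then have x0: "?x $ \<alpha> \<ge> 0" unfolding prob_simplex_def by auto
      have "?x $ \<alpha> < e"
      proof (rule ccontr)
        assume "\<not> ?x $ \<alpha> < e"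
        then have xe: "?x $ \<alpha> \<ge> e" by simp
        define x' where "x' = ?x + ?x $ \<alpha> *\<^sub>R (axis \<beta> 1 - axis \<alpha> 1)"
        have comp: "x' $ i = (if i = \<alpha> then 0 else if i = \<beta> then ?x $ \<beta> + ?x $ \<alpha> else ?x $ i)" for i
          using a unfolding x'_def axis_def by auto
        have "x' \<in> prob_simplex"
        proof -
          have "\<forall>i. 0 \<le> x' $ i" using xS x0 unfolding comp prob_simplex_def by auto
          moreover have "(\<Sum>i\<in>UNIV. x' $ i) = (\<Sum>i\<in>UNIV. ?x $ i)"
            unfolding x'_def using a by (simp add: sum.distrib axis_def sum_distrib_left[symmetric] sum_subtractf)
          ultimately show ?thesis using xS unfolding prob_simplex_def by auto
        qed
        then have le: "inner ?y x' - h x' \<le> inner ?y ?x - h ?x" using ix unfolding ismax_def by auto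
        have ip: "inner ?y x' = inner ?y ?x + ?x $ \<alpha> * (?y $ \<beta> - ?y $ \<alpha>)"
          unfolding x'_def by (simp add: inner_add_right inner_diff_right inner_axis algebra_simps)
        have hb: "\<bar>h x'\<bar> \<le> B" "\<bar>h ?x\<bar> \<le> B" using B xS \<open>x' \<in> prob_simplex\<close> by auto
        have "(2*B+1)/e \<le> ?y $ \<beta> - ?y $ \<alpha>" using j by linarith
        then have "2*B+1 \<le> e * (?y $ \<beta> - ?y $ \<alpha>)" using e by (simp add: field_simps)
        moreover have "0 \<le> ?y $ \<beta> - ?y $ \<alpha>"
        proof -
          have "0 \<le> B" using hb by linarith
          then show ?thesis using \<open>(2*B+1)/e \<le> _\<close> e
            by (smt (verit) divide_pos_pos)
        qed
        then have "e * (?y $ \<beta> - ?y $ \<alpha>) \<le> ?x $ \<alpha> * (?y $ \<beta> - ?y $ \<alpha>)"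
          using xe by (simp add: mult_right_mono)
        ultimately show False using le ip hb by linarith
      qed
      then show "dist (?x $ \<alpha>) 0 < e" using x0 by simp
    qed
  qed
qed

end
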